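(* Fix an integer $n\ge 2$ and $\lambda>0$. For $\mu>0$ let $q(t)$, $t\ge 0$, be the continuous-time Markov chain on $\{0,1,\dots,n\}$ with $q(0)=0$ and transition rates: $j\to j+1$ at rate $\lambda$ for $0\le j\le n-1$; $j\to j-1$ at rate $\mu$ for $1\le j\le n-1$; the state $n$ is absorbing. Let $\tau=\inf\{t>0:\ q(t)=n\}$. Then, as $\mu\to\infty$ (with $\lambda$ and $n$ fixed), the random variable $(\lambda/\mu)^{n-1}\tau$ converges in distribution to an exponential random variable with parameter $\lambda$; that is, for every $t\ge 0$, $$\lim_{\mu\to\infty} P\big((\lambda/\mu)^{n-1}\tau>t\big)=e^{-\lambda t},$$ equivalently, for every $s\ge 0$, $\lim_{\mu\to\infty} E\, e^{-s(\lambda/\mu)^{n-1}\tau}=\frac{\lambda}{\lambda+s}$. Moreover, with $P_{n-1}(t)=P(q(t)=n-1,\ \tau>t)$ and $\varphi_{n-1}(s)=\int_0^\infty e^{-st}P_{n-1}(t)\,dt$, one has $\lambda P_{n-1}$ equal to the density of $\tau$ and $$\lim_{\mu\to\infty}\varphi_{n-1}\big((\lambda/\mu)^{n-1}s\big)=\frac{1}{\lambda+s}\quad (s\ge 0).$$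
   Context: Model interpretation: a system of $n$ identical elements, one working and the rest in reserve, with one repair device repairing one element at a time; working times are exponential with parameter $\lambda$, repair times exponential with parameter $\mu$, all independent. $q(t)$ is the number of broken elements at time $t$, and $\tau$ is the system failure time (all $n$ elements broken). *)

theory Defs
  imports "HOL-Analysis.Analysis"
begin

definition gen :: "real \<Rightarrow> real \<Rightarrow> nat \<Rightarrow> nat \<Rightarrow> nat \<Rightarrow> real" where
  "gen lam mu n i j =
     (if i \<le> n \<and> j \<le> n then
        (if j = i + 1 \<and> i < n then lam
         else if j + 1 = i \<and> 1 \<le> i \<and> i \<le> n - 1 then mu
         else if i = j then - ((if i < n then lam else 0) + (if 1 \<le> i \<and> i \<le> n - 1 then mu else 0))
         else 0)
      else 0)"

text \<open>p j t = P(q(t) = j), characterised as the solution of the Kolmogorov forward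
  equations p' = p Q on [0,\<infinity>) with initial distribution concentrated at state 0.\<close>
definition forward_dist :: "real \<Rightarrow> real \<Rightarrow> nat \<Rightarrow> (nat \<Rightarrow> real \<Rightarrow> real) \<Rightarrow> bool" where
  "forward_dist lam mu n p \<longleftrightarrow>
     (\<forall>j\<le>n. p j 0 = (if j = 0 then 1 else 0)) \<and>
     (\<forall>j\<le>n. \<forall>t\<ge>0. (p j has_real_derivative (\<Sum>i\<le>n. p i t * gen lam mu n i j)) (at t within {0..}))"

definition laplace :: "(real \<Rightarrow> real) \<Rightarrow> real \<Rightarrow> real" where
  "laplace f s = (LINT t:{0..}|lborel. exp (- s * t) * f t)"

text \<open>Laplace-Stieltjes transform E exp(-s X) of a nonnegative random variable with
  distribution function F.\<close>
definition lst :: "(real \<Rightarrow> real) \<Rightarrow> real \<Rightarrow> real" where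
  "lst F s = (\<integral>t. exp (- s * t) \<partial>interval_measure F)"

end

theory Submission
  imports Defs
begin

definition coef :: "real \<Rightarrow> real \<Rightarrow> nat \<Rightarrow> (nat \<Rightarrow> real) \<Rightarrow> nat \<Rightarrow> real" where
  "coef lam mu n h i = (if i < n then lam * (h (i+1) - h i) else 0) + (if 1 \<le> i \<and> i < n then mu * (h (i-1) - h i) else 0)"

lemma gen_sum:
  fixes h :: "nat \<Rightarrow> real"
  assumes "i \<le> n" "n \<ge> 1"
  shows "(\<Sum>j\<le>n. gen lam mu n i j * h j) =
     (if i < n then lam * (h (i+1) - h i) else 0) + (if 1 \<le> i \<and> i < n then mu * (h (i-1) - h i) else 0)"
proof (cases "i < n")
  case False
  then have "i = n" using assms by auto
  have "gen lam mu n i j = 0" for j using \<open>i = n\<close> assms unfolding gen_def by auto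
  then show ?thesis using False by simp
next
  case True
  have eq: "gen lam mu n i j * h j = (if j = i+1 then lam * h j else 0) + (if j = i - 1 \<and> 1 \<le> i then mu * h j else 0)
      + (if j = i then - (lam + (if 1 \<le> i then mu else 0)) * h j else 0)" if "j \<le> n" for j
    using True that assms by (auto simp: gen_def)
  have "(\<Sum>j\<le>n. gen lam mu n i j * h j) = (\<Sum>j\<le>n. (if j = i+1 then lam * h j else 0)) + (\<Sum>j\<le>n. (if j = i - 1 \<and> 1 \<le> i then mu * h j else 0))
      + (\<Sum>j\<le>n. (if j = i then - (lam + (if 1 \<le> i then mu else 0)) * h j else 0))"
    by (simp add: eq sum.distrib)
  also have "\<dots> = lam * h (i+1) + (if 1 \<le> i then mu * h (i-1) else 0) - (lam + (if 1 \<le> i then mu else 0)) * h i"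
    using True by (simp add: sum.delta' sum.If_cases algebra_simps)
  finally show ?thesis using True by (cases "1 \<le> i") (simp_all add: algebra_simps)
qed

lemma gen_sum_coef: "i \<le> n \<Longrightarrow> n \<ge> 1 \<Longrightarrow> (\<Sum>j\<le>n. gen lam mu n i j * h j) = coef lam mu n h i"
  unfolding coef_def by (rule gen_sum)

lemma gen_offdiag: "i \<le> n \<Longrightarrow> j \<le> n \<Longrightarrow> i \<noteq> j \<Longrightarrow> lam > 0 \<Longrightarrow> mu > 0 \<Longrightarrow> gen lam mu n i j \<ge> 0"
  unfolding gen_def by auto

definition dd :: "real \<Rightarrow> real \<Rightarrow> nat \<Rightarrow> real" where
  "dd lam mu k = (\<Sum>i\<le>k. mu ^ i / lam ^ (i + 1))"

definition mm :: "real \<Rightarrow> real \<Rightarrow> nat \<Rightarrow> nat \<Rightarrow> real" where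
  "mm lam mu n j = (\<Sum>k\<in>{j..<n}. dd lam mu k)"

lemma dd_0: "lam > 0 \<Longrightarrow> dd lam mu 0 = 1 / lam"
  by (simp add: dd_def)

lemma dd_Suc: "lam > 0 \<Longrightarrow> lam * dd lam mu (Suc k) = 1 + mu * dd lam mu k"
proof -
  assume l: "lam > 0"
  have "dd lam mu (Suc k) = mu ^ 0 / lam ^ (0 + 1) + (\<Sum>i\<le>k. mu ^ Suc i / lam ^ (Suc i + 1))"
    unfolding dd_def by (rule sum.atMost_Suc_shift)
  also have "(\<Sum>i\<le>k. mu ^ Suc i / lam ^ (Suc i + 1)) = (\<Sum>i\<le>k. (mu / lam) * (mu ^ i / lam ^ (i + 1)))"
    using l by (intro sum.cong refl) (simp add: field_simps)
  also have "\<dots> = (mu / lam) * dd lam mu k" unfolding dd_def by (rule sum_distrib_left[symmetric])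
  finally show ?thesis using l by (simp add: field_simps)
qed

lemma dd_pos: "lam > 0 \<Longrightarrow> mu > 0 \<Longrightarrow> dd lam mu k > 0"
  unfolding dd_def by (intro sum_pos) auto

lemma mm_step: "j < n \<Longrightarrow> mm lam mu n j = dd lam mu j + mm lam mu n (Suc j)"
  unfolding mm_def by (simp add: sum.atLeast_Suc_lessThan)

lemma mm_n: "mm lam mu n n = 0" by (simp add: mm_def)

lemma mm_coef:
  assumes "lam > 0" "i < n"
  shows "coef lam mu n (mm lam mu n) i = -1"
proof (cases i)
  case 0
  then show ?thesis using assms mm_step[of 0 n lam mu] by (simp add: dd_0 coef_def)
next
  case (Suc k)
  have "mm lam mu n k = dd lam mu k + mm lam mu n i" using mm_step[of k n lam mu] Suc assms by simp
  moreover have "mm lam mu n i = dd lam mu i + mm lam mu n (Suc i)" using mm_step[of i n lam mu] assms by simp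
  moreover have "lam * dd lam mu i = 1 + mu * dd lam mu k" using dd_Suc[OF assms(1)] Suc by simp
  ultimately show ?thesis using Suc assms by (simp add: algebra_simps coef_def)
qed

lemma mm_le0: "mm lam mu n j \<le> mm lam mu n 0" if "lam > 0" "mu > 0"
  unfolding mm_def using dd_pos[OF that] by (intro sum_mono2) (auto intro: less_imp_le)

lemma mm_ge: "j < n \<Longrightarrow> lam > 0 \<Longrightarrow> mu > 0 \<Longrightarrow> dd lam mu (n - 1) \<le> mm lam mu n j"
  unfolding mm_def by (rule member_le_sum) (auto intro: less_imp_le dd_pos)

lemma mono_within:
  fixes g g' :: "real \<Rightarrow> real"
  assumes "\<And>t. t \<ge> 0 \<Longrightarrow> (g has_real_derivative g' t) (at t within {0..})"
    and "\<And>t. t \<ge> 0 \<Longrightarrow> g' t \<ge> 0" and "0 \<le> s" "s \<le> t"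
  shows "g s \<le> g t"
proof (rule DERIV_nonneg_imp_increasing_open[OF assms(4)])
  fix x assume "s < x" "x < t"
  then have "x \<in> interior {0..}" using assms by auto
  then show "\<exists>y. (g has_real_derivative y) (at x) \<and> 0 \<le> y"
    using assms(1)[of x] assms(2)[of x] at_within_interior[of x "{0..}"] \<open>s < x\<close> assms(3) by auto
next
  have "continuous_on {0..} g" by (rule DERIV_continuous_on[OF assms(1)]) auto
  then show "continuous_on {s..t} g" by (rule continuous_on_subset) (use assms in auto)
qed

lemma ftc_Ici:
  fixes F f :: "real \<Rightarrow> real"
  assumes deriv: "\<And>t. t \<ge> 0 \<Longrightarrow> (F has_real_derivative f t) (at t within {0..})"
    and cont: "continuous_on {0..} f" and nonneg: "\<And>t. t \<ge> 0 \<Longrightarrow> f t \<ge> 0"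
    and lim: "(F \<longlongrightarrow> L) at_top" and a: "a \<ge> 0"
  shows "set_integrable lborel {a..} f \<and> (LINT t:{a..}|lborel. f t) = L - F a"
proof -
  have int: "x \<in> interior {0..}" if "x > a" for x :: real using that a by auto
  have D: "DERIV F x :> f x" if "ereal a < ereal x" "ereal x < \<infinity>" for x
  proof -
    have x: "x > a" using that by simp
    show "DERIV F x :> f x" using deriv[of x] x a at_within_interior[OF int[OF x]] by auto
  qed
  have C: "isCont f x" if "ereal a < ereal x" "ereal x < \<infinity>" for x
    using that continuous_on_interior[OF cont int] by simp
  have AE: "AE x in lborel. ereal a < ereal x \<longrightarrow> ereal x < \<infinity> \<longrightarrow> 0 \<le> f x"
    using a by (intro AE_I2) (auto intro: nonneg)
  have "continuous (at a within {0..}) F" using deriv[OF a] by (rule DERIV_continuous)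
  then have "(F \<longlongrightarrow> F a) (at a within {0..})" using a by (simp add: continuous_within)
  then have "(F \<longlongrightarrow> F a) (at_right a)" by (rule tendsto_within_subset) (use a in auto)
  then have A: "((F \<circ> real_of_ereal) \<longlongrightarrow> F a) (at_right (ereal a))" by (simp add: ereal_tendsto_simps1)
  have B: "((F \<circ> real_of_ereal) \<longlongrightarrow> L) (at_left \<infinity>)" using lim by (simp add: ereal_tendsto_simps1)
  have R: "set_integrable lborel (einterval (ereal a) \<infinity>) f \<and> (LBINT x=ereal a..\<infinity>. f x) = L - F a"
    using interval_integral_FTC_nonneg[of "ereal a" \<infinity> F f, OF _ D C AE A B] by simp
  have e: "einterval (ereal a) \<infinity> = {a<..}" by simp
  have d: "({a<..} - {a..}) \<union> ({a..} - {a<..}) \<subseteq> {a}" by auto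
  have "set_integrable lborel {a..} f"
    using R e set_integrable_discrete_difference[of "{a}" "{a<..}" "{a..}" lborel f] d by auto
  moreover have "(LINT t:{a..}|lborel. f t) = L - F a"
    using R e set_integral_discrete_difference[of "{a}" "{a<..}" "{a..}" lborel f] d
    by (auto simp: interval_integral_Ioi)
  ultimately show ?thesis by blast
qed

lemma eps_dd:
  assumes "k \<le> n - 1" "mu > 0" "lam > 0"
  shows "(lam / mu) ^ (n - 1) * dd lam mu k = (\<Sum>i\<le>k. (lam / mu) ^ (n - 1 - i) / lam)"
  unfolding dd_def sum_distrib_left
proof (intro sum.cong refl)
  fix i assume "i \<in> {..k}"
  then have "n - 1 = (n - 1 - i) + i" using assms by auto
  then have "(lam / mu) ^ (n - 1) = (lam / mu) ^ (n - 1 - i) * (lam / mu) ^ i" by (metis power_add)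
  then show "(lam / mu) ^ (n - 1) * (mu ^ i / lam ^ (i + 1)) = (lam / mu) ^ (n - 1 - i) / lam"
    using assms by (simp add: power_divide field_simps)
qed

lemma lim_eps_dd:
  assumes "k \<le> n - 1" "lam > 0"
  shows "((\<lambda>mu. (lam / mu) ^ (n - 1) * dd lam mu k) \<longlongrightarrow> (if k = n - 1 then 1 / lam else 0)) at_top"
proof -
  have x0: "((\<lambda>mu::real. lam / mu) \<longlongrightarrow> 0) at_top"
    by (intro tendsto_divide_0[OF tendsto_const] filterlim_at_top_imp_at_infinity filterlim_ident)
  have "((\<lambda>mu. (\<Sum>i\<le>k. (lam / mu) ^ (n - 1 - i) / lam)) \<longlongrightarrow> (\<Sum>i\<le>k. 0 ^ (n - 1 - i) / lam)) at_top"
    by (intro tendsto_intros x0) (use assms in auto)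
  also have "(\<Sum>i\<le>k. (0::real) ^ (n - 1 - i) / lam) = (\<Sum>i\<le>k. if i = n - 1 then 1 / lam else 0)"
    using assms(1) by (intro sum.cong refl) auto
  also have "\<dots> = (if k = n - 1 then 1 / lam else 0)"
    by (subst sum.delta) (use assms(1) in auto)
  finally have L: "((\<lambda>mu. (\<Sum>i\<le>k. (lam / mu) ^ (n - 1 - i) / lam)) \<longlongrightarrow> (if k = n - 1 then 1 / lam else 0)) at_top" .
  have ev: "eventually (\<lambda>mu. (\<Sum>i\<le>k. (lam / mu) ^ (n - 1 - i) / lam) = (lam / mu) ^ (n - 1) * dd lam mu k) at_top"
    using eventually_gt_at_top[of 0] by eventually_elim (use eps_dd assms in auto)
  show ?thesis by (rule Lim_transform_eventually[OF L ev])
qed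

lemma lim_eps_bb:
  assumes "lam > 0"
  shows "((\<lambda>mu. (lam / mu) ^ (n - 1) * dd lam mu (n - 1)) \<longlongrightarrow> 1 / lam) at_top"
  using lim_eps_dd[of "n - 1" n lam] assms by simp

lemma lim_eps_aa:
  assumes "lam > 0" "n \<ge> 1"
  shows "((\<lambda>mu. (lam / mu) ^ (n - 1) * mm lam mu n 0) \<longlongrightarrow> 1 / lam) at_top"
proof -
  have "((\<lambda>mu. (\<Sum>k<n. (lam / mu) ^ (n - 1) * dd lam mu k)) \<longlongrightarrow> (\<Sum>k<n. if k = n - 1 then 1 / lam else 0)) at_top"
    by (intro tendsto_sum lim_eps_dd assms) auto
  also have "(\<Sum>k<n. if k = n - 1 then 1 / lam else 0) = 1 / lam"
    by (subst sum.delta) (use assms in auto)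
  finally show ?thesis
    by (simp add: mm_def sum_distrib_left atLeast0LessThan)
qed

lemma exp_neg_lim: "c > 0 \<Longrightarrow> ((\<lambda>t::real. exp (- c * t)) \<longlongrightarrow> 0) at_top"
proof -
  assume c: "c > 0"
  have "LIM t at_top. (- c) * t :> at_bot"
    by (rule filterlim_tendsto_neg_mult_at_bot[OF tendsto_const]) (use c in \<open>auto intro: filterlim_ident\<close>)
  then show ?thesis by (rule filterlim_compose[OF exp_at_bot])
qed

lemma exp_integral:
  fixes c :: real
  assumes c: "c > 0"
  shows "set_integrable lborel {0..} (\<lambda>t. exp (- c * t)) \<and> (LINT t:{0..}|lborel. exp (- c * t)) = 1 / c"
proof -
  have "set_integrable lborel {0..} (\<lambda>t. exp (- c * t)) \<and> (LINT t:{0..}|lborel. exp (- c * t)) = 0 - (- exp (- c * 0) / c)"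
  proof (rule ftc_Ici[where F = "\<lambda>t. - exp (- c * t) / c"])
    fix t :: real
    show "((\<lambda>t. - exp (- c * t) / c) has_real_derivative exp (- c * t)) (at t within {0..})"
      using c by (auto intro!: derivative_eq_intros)
    show "((\<lambda>t. - exp (- c * t) / c) \<longlongrightarrow> 0) at_top"
      using tendsto_divide[OF tendsto_minus[OF exp_neg_lim[OF c]] tendsto_const[of c]] c by simp
  qed (auto intro!: continuous_intros)
  then show ?thesis using c by simp
qed

lemma meas_cont:
  fixes g :: "real \<Rightarrow> real"
  shows "continuous_on {0..} g \<Longrightarrow> set_borel_measurable lborel {0..} g"
  unfolding set_borel_measurable_def measurable_lborel2 by (rule borel_measurable_continuous_on_indicator) auto

context
  fixes lam mu :: real and n :: nat and p :: "nat \<Rightarrow> real \<Rightarrow> real"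
  assumes lam: "lam > 0" and mu: "mu > 0" and n2: "n \<ge> 2" and fd: "forward_dist lam mu n p"
begin

lemma pderiv: "j \<le> n \<Longrightarrow> t \<ge> 0 \<Longrightarrow> (p j has_real_derivative (\<Sum>i\<le>n. p i t * gen lam mu n i j)) (at t within {0..})"
  using fd unfolding forward_dist_def by auto

lemma pinit: "j \<le> n \<Longrightarrow> p j 0 = (if j = 0 then 1 else 0)"
  using fd unfolding forward_dist_def by auto

lemma pcont: "j \<le> n \<Longrightarrow> continuous_on {0..} (p j)"
  by (rule DERIV_continuous_on[OF pderiv]) auto

lemma wderiv:
  fixes h :: "nat \<Rightarrow> real"
  assumes "t \<ge> 0"
  shows "((\<lambda>t. \<Sum>j\<le>n. h j * p j t) has_real_derivative
     (\<Sum>i\<le>n. p i t * coef lam mu n h i))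
     (at t within {0..})"
proof -
  have "((\<lambda>t. \<Sum>j\<le>n. h j * p j t) has_real_derivative (\<Sum>j\<le>n. h j * (\<Sum>i\<le>n. p i t * gen lam mu n i j))) (at t within {0..})"
    by (intro DERIV_sum DERIV_cmult pderiv assms) auto
  also have "(\<Sum>j\<le>n. h j * (\<Sum>i\<le>n. p i t * gen lam mu n i j)) = (\<Sum>i\<le>n. p i t * (\<Sum>j\<le>n. gen lam mu n i j * h j))"
    unfolding sum_distrib_left by (subst sum.swap) (simp add: mult.commute mult.left_commute)
  also have "\<dots> = (\<Sum>i\<le>n. p i t * coef lam mu n h i)"
    using n2 by (intro sum.cong refl) (simp add: gen_sum_coef)
  finally show ?thesis .
qed

lemma psum: "t \<ge> 0 \<Longrightarrow> (\<Sum>j\<le>n. p j t) = 1"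
proof -
  have "\<exists>c. \<forall>x\<in>{0..}. (\<Sum>j\<le>n. 1 * p j x) = c"
  proof (rule has_field_derivative_zero_constant)
    have c0: "coef lam mu n (\<lambda>_. 1) i = 0" for i by (simp add: coef_def)
    fix x :: real assume "x \<in> {0..}"
    show "((\<lambda>x. \<Sum>j\<le>n. 1 * p j x) has_real_derivative 0) (at x within {0..})"
      by (rule DERIV_cong[OF wderiv[where h="\<lambda>_. 1" and t=x]]) (use \<open>x \<in> {0..}\<close> c0 in auto)
  qed simp
  then obtain c where c: "\<And>x. x \<ge> 0 \<Longrightarrow> (\<Sum>j\<le>n. p j x) = c" by auto
  have "(\<Sum>j\<le>n. p j 0) = 1"
    by (simp add: pinit sum.delta)
  then show "t \<ge> 0 \<Longrightarrow> (\<Sum>j\<le>n. p j t) = 1" using c[of 0] c[of t] by simp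
qed

lemma ppos_aux:
  assumes K: "\<And>j. j \<le> n \<Longrightarrow> (\<Sum>i\<le>n. gen lam mu n i j) < K"
  assumes dpos: "\<delta> > 0"
  shows "\<forall>j\<le>n. \<forall>t\<ge>0. p j t + \<delta> * exp (K * t) > 0"
proof (rule ccontr)
  assume "\<not> ?thesis"
  then obtain j0 t0 where j0: "j0 \<le> n" "t0 \<ge> 0" "p j0 t0 + \<delta> * exp (K * t0) \<le> 0" by force
  define z where "z j t = p j t + \<delta> * exp (K * t)" for j t
  have zc: "continuous_on {0..} (z j)" if "j \<le> n" for j
    unfolding z_def by (intro continuous_intros pcont that)
  have zd: "(z j has_real_derivative (\<Sum>i\<le>n. p i t * gen lam mu n i j) + \<delta> * (exp (K * t) * K)) (at t within {0..})"
    if "j \<le> n" "t \<ge> 0" for j t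
    unfolding z_def by (intro DERIV_add pderiv that) (auto intro!: derivative_eq_intros)
  have z0: "z j 0 > 0" if "j \<le> n" for j
    using that dpos by (simp add: z_def pinit)
  define S where "S = (\<Union>j\<le>n. {t\<in>{0..t0}. z j t \<le> 0})"
  have "closed S" unfolding S_def
    by (intro closed_UN finite_atMost ballI continuous_on_closed_Collect_le continuous_on_const
         continuous_on_subset[OF zc]) auto
  have "t0 \<in> S" using j0 by (auto simp: S_def z_def)
  have bdd: "bdd_below S" by (auto simp: S_def bdd_below_def)
  define ts where "ts = Inf S"
  have "ts \<in> S" unfolding ts_def using \<open>closed S\<close> \<open>t0 \<in> S\<close> bdd closed_contains_Inf by blast
  then obtain j where j: "j \<le> n" "z j ts \<le> 0" "0 \<le> ts" "ts \<le> t0" by (auto simp: S_def)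
  have below: "z i t > 0" if "i \<le> n" "0 \<le> t" "t < ts" for i t
  proof (rule ccontr)
    assume "\<not> z i t > 0"
    then have "t \<in> S" using that \<open>ts \<le> t0\<close> unfolding S_def by force
    then have "ts \<le> t" unfolding ts_def using bdd by (rule cInf_lower)
    with that show False by simp
  qed
  have "ts > 0" using z0[OF j(1)] j by (cases "ts = 0") auto
  have atts: "z i ts \<ge> 0" if i_le: "i \<le> n" for i
  proof (rule ccontr)
    assume "\<not> z i ts \<ge> 0"
    then have "z i ts \<le> 0" "0 \<le> z i 0" using z0[OF i_le] by auto
    then obtain s where s: "0 \<le> s" "s \<le> ts" "z i s = 0"
      using IVT2'[of "z i" ts 0 0] continuous_on_subset[OF zc[OF i_le], of "{0..ts}"] \<open>ts > 0\<close> by auto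
    show False
    proof (cases "s = ts")
      case True then show False using s \<open>\<not> z i ts \<ge> 0\<close> by simp
    next
      case False then show False using below[OF i_le s(1)] s by simp
    qed
  qed
  have zj0: "z j ts = 0" using atts[OF j(1)] j(2) by simp
  have sum_nonneg': "(\<Sum>i\<le>n. p i ts * gen lam mu n i j) + \<delta> * (exp (K * ts) * K) > 0"
  proof -
    have eq: "p i ts = z i ts - \<delta> * exp (K * ts)" for i by (simp add: z_def)
    have "(\<Sum>i\<le>n. p i ts * gen lam mu n i j) = (\<Sum>i\<le>n. z i ts * gen lam mu n i j) - \<delta> * exp (K * ts) * (\<Sum>i\<le>n. gen lam mu n i j)"
      by (simp add: eq algebra_simps sum_subtractf sum_distrib_left)
    moreover have "(\<Sum>i\<le>n. z i ts * gen lam mu n i j) \<ge> 0"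
    proof (rule sum_nonneg)
      fix i assume "i \<in> {..n}"
      then show "0 \<le> z i ts * gen lam mu n i j"
        using atts[of i] gen_offdiag[of i n j lam mu] lam mu j zj0 by (cases "i = j") auto
    qed
    moreover have "\<delta> * exp (K * ts) * (\<Sum>i\<le>n. gen lam mu n i j) < \<delta> * exp (K * ts) * K"
      using K[OF j(1)] dpos by simp
    ultimately show ?thesis by (simp add: algebra_simps)
  qed
  obtain d where d: "d > 0" "\<And>h. h > 0 \<Longrightarrow> ts - h \<in> {0..} \<Longrightarrow> h < d \<Longrightarrow> z j (ts - h) < z j ts"
    using has_real_derivative_pos_inc_left[OF zd[OF j(1) j(3)] sum_nonneg'] by blast
  define h where "h = min d ts / 2"
  have "h > 0" "h < d" "ts - h \<ge> 0" "ts - h < ts" using d \<open>ts > 0\<close> by (auto simp: h_def)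
  then have "z j (ts - h) < 0" using d(2)[of h] zj0 by auto
  moreover have "z j (ts - h) > 0" using below[OF j(1)] \<open>ts - h \<ge> 0\<close> \<open>ts - h < ts\<close> by simp
  ultimately show False by simp
qed

lemma ppos: "j \<le> n \<Longrightarrow> t \<ge> 0 \<Longrightarrow> p j t \<ge> 0"
proof (rule ccontr)
  assume j: "j \<le> n" "t \<ge> 0" "\<not> p j t \<ge> 0"
  define K where "K = 1 + (\<Sum>j\<le>n. \<Sum>i\<le>n. \<bar>gen lam mu n i j\<bar>)"
  have K: "(\<Sum>i\<le>n. gen lam mu n i j) < K" if "j \<le> n" for j
  proof -
    have "(\<Sum>i\<le>n. gen lam mu n i j) \<le> (\<Sum>i\<le>n. \<bar>gen lam mu n i j\<bar>)" by (intro sum_mono) auto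
    also have "\<dots> \<le> (\<Sum>j\<le>n. \<Sum>i\<le>n. \<bar>gen lam mu n i j\<bar>)"
      by (rule member_le_sum) (use that in \<open>auto intro: sum_nonneg\<close>)
    finally show ?thesis unfolding K_def by simp
  qed
  define \<delta> where "\<delta> = - p j t / (2 * exp (K * t))"
  have "\<delta> > 0" using j by (simp add: \<delta>_def divide_neg_pos)
  from ppos_aux[OF K this] j have "p j t + \<delta> * exp (K * t) > 0" by blast
  then show False using j by (simp add: \<delta>_def)
qed

definition "aa = mm lam mu n 0"
definition "bb = dd lam mu (n - 1)"
definition "uu t = 1 - p n t"
definition "ff t = (\<Sum>j\<le>n. mm lam mu n j * p j t)"

lemma bb_pos: "bb > 0" unfolding bb_def using lam mu by (rule dd_pos)
lemma bb_le_aa: "bb \<le> aa" unfolding aa_def bb_def using n2 lam mu by (intro mm_ge) auto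

lemma uu_sum: "t \<ge> 0 \<Longrightarrow> uu t = (\<Sum>j<n. p j t)"
  using psum[of t] unfolding uu_def by (simp add: lessThan_Suc_atMost[symmetric])

lemma ff_sum: "ff t = (\<Sum>j<n. mm lam mu n j * p j t)"
  unfolding ff_def by (simp add: lessThan_Suc_atMost[symmetric] mm_n)

lemma ff_deriv: "t \<ge> 0 \<Longrightarrow> (ff has_real_derivative - uu t) (at t within {0..})"
proof -
  assume t: "t \<ge> 0"
  have "(ff has_real_derivative (\<Sum>i\<le>n. p i t * coef lam mu n (mm lam mu n) i)) (at t within {0..})"
    unfolding ff_def[abs_def] by (rule wderiv[OF t])
  also have "(\<Sum>i\<le>n. p i t * coef lam mu n (mm lam mu n) i) = (\<Sum>i<n. p i t * coef lam mu n (mm lam mu n) i) + p n t * coef lam mu n (mm lam mu n) n"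
    unfolding lessThan_Suc_atMost[symmetric] by (rule sum.lessThan_Suc)
  also have "(\<Sum>i<n. p i t * coef lam mu n (mm lam mu n) i) = (\<Sum>i<n. - p i t)"
    using lam by (intro sum.cong refl) (simp add: mm_coef)
  also have "coef lam mu n (mm lam mu n) n = 0" by (simp add: coef_def)
  also have "(\<Sum>i<n. - p i t) + p n t * 0 = - uu t" using uu_sum[OF t] by (simp add: sum_negf)
  finally show ?thesis .
qed

lemma ff_bounds: "t \<ge> 0 \<Longrightarrow> bb * uu t \<le> ff t \<and> ff t \<le> aa * uu t"
proof -
  assume t: "t \<ge> 0"
  have "bb * uu t = (\<Sum>j<n. bb * p j t)" using uu_sum[OF t] by (simp add: sum_distrib_left)
  also have "\<dots> \<le> ff t" unfolding ff_sum
    by (intro sum_mono mult_right_mono ppos t) (use lam mu mm_ge[of _ n lam mu] in \<open>auto simp: bb_def\<close>)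
  finally have 1: "bb * uu t \<le> ff t" .
  have "ff t \<le> (\<Sum>j<n. aa * p j t)" unfolding ff_sum
    by (intro sum_mono mult_right_mono ppos t) (use lam mu in \<open>auto simp: aa_def intro: mm_le0\<close>)
  also have "\<dots> = aa * uu t" using uu_sum[OF t] by (simp add: sum_distrib_left)
  finally show ?thesis using 1 by simp
qed

lemma ff0: "ff 0 = aa"
proof -
  have "ff 0 = (\<Sum>j\<le>n. if j = 0 then mm lam mu n j else 0)"
    unfolding ff_def by (rule sum.cong) (auto simp: pinit)
  also have "\<dots> = aa" unfolding aa_def by (subst sum.delta) auto
  finally show ?thesis .
qed

lemma uu_bounds: "t \<ge> 0 \<Longrightarrow> exp (- t / bb) \<le> uu t \<and> uu t \<le> aa / bb * exp (- t / aa)"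
proof -
  assume t: "t \<ge> 0"
  have aa_pos: "aa > 0" using bb_pos bb_le_aa by linarith
  have up: "exp (t / aa) * ff t \<le> exp (0 / aa) * ff 0"
  proof -
    have "- (exp (s / aa) * ff s) \<le> - (exp (t / aa) * ff t)" if "0 \<le> s" "s \<le> t" for s t
    proof (rule mono_within[where g = "\<lambda>t. - (exp (t / aa) * ff t)"])
      fix x :: real assume x: "x \<ge> 0"
      show "((\<lambda>t. - (exp (t / aa) * ff t)) has_real_derivative - (exp (x / aa) * (1 / aa) * ff x + exp (x / aa) * (- uu x))) (at x within {0..})"
        using aa_pos by (auto intro!: derivative_eq_intros ff_deriv x)
      have "ff x \<le> aa * uu x" using ff_bounds[OF x] by simp
      then have "ff x / aa \<le> uu x" using aa_pos by (simp add: field_simps)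
      then have "ff x / aa * exp (x / aa) \<le> uu x * exp (x / aa)" by (rule mult_right_mono) simp
      then show "0 \<le> - (exp (x / aa) * (1 / aa) * ff x + exp (x / aa) * (- uu x))"
        by (simp add: algebra_simps)
    qed (use that in auto)
    from this[of 0 t] t show ?thesis by simp
  qed
  have lo: "exp (0 / bb) * ff 0 \<le> exp (t / bb) * ff t"
  proof (rule mono_within[where g = "\<lambda>t. exp (t / bb) * ff t"])
    fix x :: real assume x: "x \<ge> 0"
    show "((\<lambda>t. exp (t / bb) * ff t) has_real_derivative (exp (x / bb) * (1 / bb) * ff x + exp (x / bb) * (- uu x))) (at x within {0..})"
      using bb_pos by (auto intro!: derivative_eq_intros ff_deriv x)
    have "bb * uu x \<le> ff x" using ff_bounds[OF x] by simp
    then have "uu x \<le> ff x / bb" using bb_pos by (simp add: field_simps)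
    then have "uu x * exp (x / bb) \<le> ff x / bb * exp (x / bb)" by (rule mult_right_mono) simp
    then show "0 \<le> (exp (x / bb) * (1 / bb) * ff x + exp (x / bb) * (- uu x))"
      by (simp add: algebra_simps)
  qed (use t in auto)
  have f_up: "ff t \<le> aa * exp (- t / aa)"
    using up unfolding ff0 by (simp add: exp_minus field_simps)
  have f_lo: "aa * exp (- t / bb) \<le> ff t"
    using lo unfolding ff0 by (simp add: exp_minus field_simps)
  have "exp (- t / bb) \<le> uu t"
    using f_lo ff_bounds[OF t] aa_pos by (smt (verit) mult_le_cancel_left_pos)
  moreover have "uu t \<le> aa / bb * exp (- t / aa)"
  proof -
    have "bb * uu t \<le> aa * exp (- t / aa)" using f_up ff_bounds[OF t] by linarith
    then show ?thesis using bb_pos by (simp add: field_simps)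
  qed
  ultimately show ?thesis by simp
qed

lemma pn_deriv: "t \<ge> 0 \<Longrightarrow> (p n has_real_derivative lam * p (n - 1) t) (at t within {0..})"
proof -
  assume t: "t \<ge> 0"
  have g: "gen lam mu n i n = (if i = n - 1 then lam else 0)" if "i \<le> n" for i
    using that n2 unfolding gen_def by auto
  have "(\<Sum>i\<le>n. p i t * gen lam mu n i n) = (\<Sum>i\<le>n. if i = n - 1 then p i t * lam else 0)"
    by (intro sum.cong refl) (simp add: g)
  also have "\<dots> = lam * p (n - 1) t" by (subst sum.delta) (use n2 in auto)
  finally show ?thesis using pderiv[of n t] t by simp
qed

lemma uu_deriv: "t \<ge> 0 \<Longrightarrow> (uu has_real_derivative - (lam * p (n - 1) t)) (at t within {0..})"
  unfolding uu_def[abs_def] by (auto intro!: derivative_eq_intros pn_deriv)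

lemma uu_cont: "continuous_on {0..} uu"
  unfolding uu_def[abs_def] using n2 by (intro continuous_intros pcont) auto

lemma uu_nonneg: "t \<ge> 0 \<Longrightarrow> uu t \<ge> 0"
  using uu_bounds[of t] by (meson exp_ge_zero order_trans)

lemma aa_pos: "aa > 0" using bb_pos bb_le_aa by linarith

lemma lap_main:
  assumes s: "\<sigma> \<ge> 0"
  shows "set_integrable lborel {0..} (\<lambda>t. exp (- \<sigma> * t) * p (n - 1) t)"
    "set_integrable lborel {0..} (\<lambda>t. exp (- \<sigma> * t) * uu t)"
    "lam * laplace (p (n - 1)) \<sigma> + \<sigma> * laplace uu \<sigma> = 1"
proof -
  define f where "f t = exp (- \<sigma> * t) * (lam * p (n - 1) t + \<sigma> * uu t)" for t
  have fc: "continuous_on {0..} f" unfolding f_def[abs_def] using n2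
    by (intro continuous_intros pcont uu_cont) auto
  have fnn: "f t \<ge> 0" if "t \<ge> 0" for t
    unfolding f_def using that s lam n2 by (intro mult_nonneg_nonneg add_nonneg_nonneg ppos uu_nonneg) auto
  have lim: "((\<lambda>t. - (exp (- \<sigma> * t) * uu t)) \<longlongrightarrow> 0) at_top"
  proof (rule tendsto_sandwich[where f = "\<lambda>t. - (aa / bb * exp (- (1 / aa) * t))" and h = "\<lambda>t. 0"])
    show "eventually (\<lambda>t. - (aa / bb * exp (- (1 / aa) * t)) \<le> - (exp (- \<sigma> * t) * uu t)) at_top"
      using eventually_ge_at_top[of 0]
    proof eventually_elim
      case (elim t)
      have "exp (- \<sigma> * t) * uu t \<le> 1 * uu t"
        using elim s uu_nonneg[OF elim] by (intro mult_right_mono) auto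
      also have "\<dots> \<le> aa / bb * exp (- (1 / aa) * t)" using uu_bounds[OF elim] by simp
      finally show ?case by simp
    qed
    show "eventually (\<lambda>t. - (exp (- \<sigma> * t) * uu t) \<le> 0) at_top"
      using eventually_ge_at_top[of 0] by eventually_elim (simp add: uu_nonneg)
    show "((\<lambda>t. - (aa / bb * exp (- (1 / aa) * t))) \<longlongrightarrow> 0) at_top"
      using tendsto_minus[OF tendsto_mult[OF tendsto_const[of "aa / bb"] exp_neg_lim[of "1 / aa"]]] aa_pos by simp
  qed simp
  have R: "set_integrable lborel {0..} f \<and> (LINT t:{0..}|lborel. f t) = 0 - (- (exp (- \<sigma> * 0) * uu 0))"
  proof (rule ftc_Ici[OF _ fc fnn lim])
    fix t :: real assume t: "t \<ge> 0"
    show "((\<lambda>t. - (exp (- \<sigma> * t) * uu t)) has_real_derivative f t) (at t within {0..})"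
      unfolding f_def by (rule derivative_eq_intros refl uu_deriv t | simp add: algebra_simps)+
  qed auto
  have u0: "uu 0 = 1" unfolding uu_def using pinit[of n] n2 by simp
  have m1: "set_borel_measurable lborel {0..} (\<lambda>t. exp (- \<sigma> * t) * p (n - 1) t)"
    by (intro meas_cont continuous_intros pcont) auto
  have m2: "set_borel_measurable lborel {0..} (\<lambda>t. exp (- \<sigma> * t) * uu t)"
    by (intro meas_cont continuous_intros uu_cont)
  have i1: "set_integrable lborel {0..} (\<lambda>t. exp (- \<sigma> * t) * p (n - 1) t)"
  proof (rule set_integrable_bound[OF _ m1])
    show "set_integrable lborel {0..} (\<lambda>t. f t / lam)" using R by simp
    show "AE x in lborel. x \<in> {0..} \<longrightarrow> norm (exp (- \<sigma> * x) * p (n - 1) x) \<le> norm (f x / lam)"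
    proof (intro AE_I2 impI)
      fix x :: real assume "x \<in> {0..}"
      then have x: "x \<ge> 0" by simp
      have "0 \<le> exp (- \<sigma> * x) * p (n - 1) x" using ppos[of "n - 1" x] x by simp
      moreover have "exp (- \<sigma> * x) * p (n - 1) x \<le> f x / lam"
        unfolding f_def using lam s uu_nonneg[OF x] ppos[of "n - 1" x] x
        by (simp add: field_simps mult_left_mono)
      ultimately show "norm (exp (- \<sigma> * x) * p (n - 1) x) \<le> norm (f x / lam)" using fnn[OF x] lam by simp
    qed
  qed
  show i2: "set_integrable lborel {0..} (\<lambda>t. exp (- \<sigma> * t) * uu t)"
  proof (rule set_integrable_bound[OF _ m2])
    show "set_integrable lborel {0..} (\<lambda>t. aa / bb * exp (- (1 / aa) * t))"
      using exp_integral[of "1 / aa"] aa_pos by simp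
    show "AE x in lborel. x \<in> {0..} \<longrightarrow> norm (exp (- \<sigma> * x) * uu x) \<le> norm (aa / bb * exp (- (1 / aa) * x))"
    proof (intro AE_I2 impI)
      fix x :: real assume "x \<in> {0..}"
      then have x: "x \<ge> 0" by simp
      have "exp (- \<sigma> * x) * uu x \<le> 1 * uu x"
        using x s uu_nonneg[OF x] by (intro mult_right_mono) auto
      also have "\<dots> \<le> aa / bb * exp (- (1 / aa) * x)" using uu_bounds[OF x] by simp
      finally show "norm (exp (- \<sigma> * x) * uu x) \<le> norm (aa / bb * exp (- (1 / aa) * x))"
        using uu_nonneg[OF x] aa_pos bb_pos by simp
    qed
  qed
  show "set_integrable lborel {0..} (\<lambda>t. exp (- \<sigma> * t) * p (n - 1) t)" by (rule i1)
  have "(LINT t:{0..}|lborel. f t) = (LINT t:{0..}|lborel. lam * (exp (- \<sigma> * t) * p (n - 1) t) + \<sigma> * (exp (- \<sigma> * t) * uu t))"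
    unfolding f_def by (simp add: algebra_simps)
  also have "\<dots> = lam * laplace (p (n - 1)) \<sigma> + \<sigma> * laplace uu \<sigma>"
    unfolding laplace_def using i1 i2 by (simp add: set_integral_add set_integral_mult_right)
  finally show "lam * laplace (p (n - 1)) \<sigma> + \<sigma> * laplace uu \<sigma> = 1" using R u0 by simp
qed

lemma lap_uu_bounds:
  assumes s: "\<sigma> \<ge> 0"
  shows "\<sigma> / (\<sigma> + 1 / bb) \<le> \<sigma> * laplace uu \<sigma> \<and> \<sigma> * laplace uu \<sigma> \<le> aa / bb * (\<sigma> / (\<sigma> + 1 / aa))"
proof -
  have cb: "\<sigma> + 1 / bb > 0" using s bb_pos by (simp add: add_nonneg_pos)
  have ca: "\<sigma> + 1 / aa > 0" using s aa_pos by (simp add: add_nonneg_pos)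
  note EB = exp_integral[OF cb] and EA = exp_integral[OF ca]
  note IU = lap_main(2)[OF s]
  have "1 / (\<sigma> + 1 / bb) = (LINT t:{0..}|lborel. exp (- (\<sigma> + 1 / bb) * t))" using EB by simp
  also have "\<dots> \<le> laplace uu \<sigma>" unfolding laplace_def
  proof (rule set_integral_mono[OF conjunct1[OF EB] IU])
    fix t :: real assume "t \<in> {0..}"
    then have t: "t \<ge> 0" by simp
    have "exp (- (\<sigma> + 1 / bb) * t) = exp (- \<sigma> * t) * exp (- t / bb)"
      by (simp add: exp_add[symmetric] algebra_simps)
    also have "\<dots> \<le> exp (- \<sigma> * t) * uu t" using uu_bounds[OF t] by (intro mult_left_mono) auto
    finally show "exp (- (\<sigma> + 1 / bb) * t) \<le> exp (- \<sigma> * t) * uu t" .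
  qed
  finally have lo: "1 / (\<sigma> + 1 / bb) \<le> laplace uu \<sigma>" .
  have "laplace uu \<sigma> \<le> (LINT t:{0..}|lborel. aa / bb * exp (- (\<sigma> + 1 / aa) * t))" unfolding laplace_def
  proof (rule set_integral_mono[OF IU])
    show "set_integrable lborel {0..} (\<lambda>t. aa / bb * exp (- (\<sigma> + 1 / aa) * t))" using EA by simp
    fix t :: real assume "t \<in> {0..}"
    then have t: "t \<ge> 0" by simp
    have "exp (- \<sigma> * t) * uu t \<le> exp (- \<sigma> * t) * (aa / bb * exp (- t / aa))"
      using uu_bounds[OF t] by (intro mult_left_mono) auto
    also have "\<dots> = aa / bb * exp (- (\<sigma> + 1 / aa) * t)"
      by (simp add: exp_add[symmetric] algebra_simps)
    finally show "exp (- \<sigma> * t) * uu t \<le> aa / bb * exp (- (\<sigma> + 1 / aa) * t)" .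
  qed
  also have "\<dots> = aa / bb * (1 / (\<sigma> + 1 / aa))" using EA by simp
  finally have up: "laplace uu \<sigma> \<le> aa / bb * (1 / (\<sigma> + 1 / aa))" .
  have "\<sigma> * (1 / (\<sigma> + 1 / bb)) \<le> \<sigma> * laplace uu \<sigma>" using lo s by (rule mult_left_mono)
  moreover have "\<sigma> * laplace uu \<sigma> \<le> \<sigma> * (aa / bb * (1 / (\<sigma> + 1 / aa)))" using up s by (rule mult_left_mono)
  ultimately show ?thesis by (simp add: ac_simps)
qed

lemma pn_mono: "0 \<le> s \<Longrightarrow> s \<le> t \<Longrightarrow> p n s \<le> p n t"
  by (rule mono_within[OF pn_deriv]) (use lam n2 in \<open>auto intro!: mult_nonneg_nonneg ppos\<close>)

lemma uu_lim: "(uu \<longlongrightarrow> 0) at_top"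
proof (rule tendsto_sandwich[where f = "\<lambda>t. 0" and h = "\<lambda>t. aa / bb * exp (- (1 / aa) * t)"])
  show "eventually (\<lambda>t. 0 \<le> uu t) at_top"
    using eventually_ge_at_top[of 0] by eventually_elim (rule uu_nonneg)
  show "eventually (\<lambda>t. uu t \<le> aa / bb * exp (- (1 / aa) * t)) at_top"
    using eventually_ge_at_top[of 0] by eventually_elim (use uu_bounds in simp)
  show "((\<lambda>t. aa / bb * exp (- (1 / aa) * t)) \<longlongrightarrow> 0) at_top"
    using tendsto_mult[OF tendsto_const[of "aa / bb"] exp_neg_lim[of "1 / aa"]] aa_pos by simp
qed simp

lemma pn_lim: "(p n \<longlongrightarrow> 1) at_top"
proof -
  have "((\<lambda>t. 1 - uu t) \<longlongrightarrow> 1 - 0) at_top" by (intro tendsto_intros uu_lim)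
  then show ?thesis by (simp add: uu_def)
qed

definition "GG t = (if t < 0 then 0 else p n t)"
definition "gr t = indicator {0..} t * (lam * p (n - 1) t)"

lemma pn0: "p n 0 = 0" using pinit[of n] n2 by simp

lemma GG_mono: "x \<le> y \<Longrightarrow> GG x \<le> GG y"
  unfolding GG_def using pn_mono ppos[of n] by auto

lemma GG_rcont: "continuous (at_right a) GG"
proof (cases "a < 0")
  case True
  have "eventually (\<lambda>x. GG x = 0) (at_right a)"
    using eventually_at_right_less[of a] eventually_at_right[of a 0] True
    by (auto simp: GG_def elim!: eventually_mono)
  then show ?thesis unfolding continuous_within using True
    by (simp add: GG_def tendsto_eventually)
next
  case False
  then have a: "a \<ge> 0" by simp
  have "continuous (at a within {0..}) (p n)" using pn_deriv[OF a] by (rule DERIV_continuous)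
  then have "(p n \<longlongrightarrow> p n a) (at a within {0..})" by (simp add: continuous_within)
  then have "(p n \<longlongrightarrow> p n a) (at_right a)" by (rule tendsto_within_subset) (use a in auto)
  moreover have "eventually (\<lambda>x. p n x = GG x) (at_right a)"
    using eventually_at_right_less[of a] a by (auto simp: GG_def elim!: eventually_mono)
  ultimately have "(GG \<longlongrightarrow> p n a) (at_right a)" by (rule Lim_transform_eventually)
  then show ?thesis using a unfolding continuous_within by (simp add: GG_def)
qed

lemma GG_lim: "(GG \<longlongrightarrow> 1) at_top"
proof -
  have "eventually (\<lambda>x. p n x = GG x) at_top"
    using eventually_ge_at_top[of 0] by eventually_elim (simp add: GG_def)
  with pn_lim show ?thesis by (rule Lim_transform_eventually)
qed

lemma GG_Ioi: "emeasure (interval_measure GG) {x<..} = ennreal (1 - GG x)"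
proof -
  define A where "A k = {x<..x + real k}" for k :: nat
  have inc: "incseq A" unfolding A_def incseq_def by auto
  have U: "(\<Union>k. A k) = {x<..}"
  proof (auto simp: A_def)
    fix y assume "x < y"
    obtain k :: nat where "y - x < real k" using reals_Archimedean2 by blast
    then show "\<exists>k. y \<le> x + real k" by (intro exI[of _ k]) simp
  qed
  have L1: "(\<lambda>k. emeasure (interval_measure GG) (A k)) \<longlonglongrightarrow> emeasure (interval_measure GG) (\<Union>k. A k)"
    by (rule Lim_emeasure_incseq[OF _ inc]) (auto simp: A_def)
  have E: "emeasure (interval_measure GG) (A k) = ennreal (GG (x + real k) - GG x)" for k
    unfolding A_def by (rule emeasure_interval_measure_Ioc) (auto intro: GG_mono GG_rcont)
  have "filterlim (\<lambda>k::nat. x + real k) at_top sequentially"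
    by (rule filterlim_tendsto_add_at_top[OF tendsto_const filterlim_real_sequentially])
  then have "(\<lambda>k. GG (x + real k)) \<longlonglongrightarrow> 1" by (rule filterlim_compose[OF GG_lim])
  then have "(\<lambda>k. GG (x + real k) - GG x) \<longlonglongrightarrow> 1 - GG x" by (intro tendsto_intros)
  then have L2: "(\<lambda>k. emeasure (interval_measure GG) (A k)) \<longlonglongrightarrow> ennreal (1 - GG x)"
    unfolding E by (rule tendsto_ennrealI)
  show ?thesis using LIMSEQ_unique[OF L1 L2] U by simp
qed

lemma gr_meas: "gr \<in> borel_measurable lborel"
proof -
  have "(\<lambda>t. indicator {0..} t *\<^sub>R (lam * p (n - 1) t)) \<in> borel_measurable borel"
    by (rule borel_measurable_continuous_on_indicator) (use n2 in \<open>auto intro!: continuous_intros pcont\<close>)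
  then show ?thesis unfolding gr_def[abs_def] by simp
qed

lemma gr_meas': "gr \<in> borel_measurable borel" using gr_meas by simp

lemma gr_meas_e: "(\<lambda>x. ennreal (gr x)) \<in> borel_measurable borel"
  by (rule measurable_compose[OF gr_meas' measurable_ennreal])

lemma gr_nonneg: "gr t \<ge> 0"
  unfolding gr_def using lam ppos[of "n - 1" t] by (auto simp: indicator_def)

lemma dens_Ioi: "emeasure (density lborel gr) {x<..} = ennreal (1 - GG x)"
proof -
  define a where "a = max x 0"
  have a0: "a \<ge> 0" by (simp add: a_def)
  have F: "set_integrable lborel {a..} (\<lambda>t. lam * p (n - 1) t) \<and> (LINT t:{a..}|lborel. lam * p (n - 1) t) = 1 - p n a"
    by (rule ftc_Ici[OF pn_deriv _ _ pn_lim a0]) (use lam n2 in \<open>auto intro!: continuous_intros pcont mult_nonneg_nonneg ppos\<close>)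
  have "emeasure (density lborel gr) {x<..} = (\<integral>\<^sup>+ y. ennreal (gr y) * indicator {x<..} y \<partial>lborel)"
    by (rule emeasure_density) (auto simp: gr_meas_e)
  also have "\<dots> = (\<integral>\<^sup>+ y. ennreal (indicator {a..} y *\<^sub>R (lam * p (n - 1) y)) \<partial>lborel)"
  proof (rule nn_integral_cong_AE)
    show "AE y in lborel. ennreal (gr y) * indicator {x<..} y = ennreal (indicator {a..} y *\<^sub>R (lam * p (n - 1) y))"
      using AE_lborel_singleton[of x]
      by eventually_elim (auto simp: gr_def a_def indicator_def)
  qed
  also have "\<dots> = ennreal (integral\<^sup>L lborel (\<lambda>y. indicator {a..} y *\<^sub>R (lam * p (n - 1) y)))"
  proof (rule nn_integral_eq_integral)
    show "integrable lborel (\<lambda>y. indicator {a..} y *\<^sub>R (lam * p (n - 1) y))"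
      using F unfolding set_integrable_def by blast
    show "AE y in lborel. 0 \<le> indicator {a..} y *\<^sub>R (lam * p (n - 1) y)"
      using a0 lam by (intro AE_I2) (auto simp: indicator_def intro!: mult_nonneg_nonneg ppos)
  qed
  also have "integral\<^sup>L lborel (\<lambda>y. indicator {a..} y *\<^sub>R (lam * p (n - 1) y)) = 1 - p n a"
    using F unfolding set_lebesgue_integral_def by blast
  also have "1 - p n a = 1 - GG x" by (auto simp: a_def GG_def pn0 max_def)
  finally show ?thesis .
qed

lemma meas_eq: "interval_measure GG = density lborel gr"
proof (rule measure_eqI_lessThan)
  show "sets (interval_measure GG) = sets borel" by simp
  show "sets (density lborel gr) = sets borel" by simp
  fix x :: real
  show "emeasure (interval_measure GG) {x<..} < \<infinity>" by (simp add: GG_Ioi)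
  show "emeasure (interval_measure GG) {x<..} = emeasure (density lborel gr) {x<..}"
    by (simp add: GG_Ioi dens_Ioi)
qed

lemma lst_eq: "lst GG \<sigma> = lam * laplace (p (n - 1)) \<sigma>"
proof -
  have "lst GG \<sigma> = integral\<^sup>L (density lborel gr) (\<lambda>t. exp (- \<sigma> * t))"
    unfolding lst_def meas_eq ..
  also have "\<dots> = integral\<^sup>L lborel (\<lambda>t. gr t *\<^sub>R exp (- \<sigma> * t))"
    by (rule integral_density) (auto simp: gr_meas' gr_nonneg)
  also have "(\<lambda>t. gr t *\<^sub>R exp (- \<sigma> * t)) = (\<lambda>t. lam * (indicator {0..} t *\<^sub>R (exp (- \<sigma> * t) * p (n - 1) t)))"
    by (auto simp: gr_def)
  also have "integral\<^sup>L lborel \<dots> = lam * laplace (p (n - 1)) \<sigma>"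
    unfolding laplace_def set_lebesgue_integral_def by simp
  finally show ?thesis .
qed

lemma key:
  defines "eps \<equiv> (lam / mu) ^ (n - 1)"
  defines "A \<equiv> eps * mm lam mu n 0"
  defines "B \<equiv> eps * dd lam mu (n - 1)"
  shows "\<forall>t\<ge>0. exp (- t / B) \<le> 1 - p n (t / eps) \<and> 1 - p n (t / eps) \<le> A / B * exp (- t / A)"
    and "\<forall>s\<ge>0. (1 - A / B * (s / (s + 1 / A))) / lam \<le> laplace (p (n - 1)) (eps * s) \<and>
                laplace (p (n - 1)) (eps * s) \<le> (1 - s / (s + 1 / B)) / lam"
    and "\<forall>s. lst (\<lambda>t. if t < 0 then 0 else p n t) s = lam * laplace (p (n - 1)) s"
    and "\<forall>t\<ge>0. (p n has_real_derivative lam * p (n - 1) t) (at t within {0..})"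
proof -
  have e: "eps > 0" unfolding eps_def using lam mu by simp
  have AB: "A = eps * aa" "B = eps * bb" unfolding A_def B_def aa_def bb_def by simp_all
  have ab: "aa > 0" "bb > 0" using aa_pos bb_pos by auto
  show "\<forall>t\<ge>0. exp (- t / B) \<le> 1 - p n (t / eps) \<and> 1 - p n (t / eps) \<le> A / B * exp (- t / A)"
  proof (intro allI impI)
    fix t :: real assume t: "t \<ge> 0"
    have T: "t / eps \<ge> 0" using t e by simp
    have "- t / B = - (t / eps) / bb" "- t / A = - (t / eps) / aa" "A / B = aa / bb"
      unfolding AB using e ab by (simp_all add: field_simps)
    then show "exp (- t / B) \<le> 1 - p n (t / eps) \<and> 1 - p n (t / eps) \<le> A / B * exp (- t / A)"
      using uu_bounds[OF T] unfolding uu_def by (simp only:)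
  qed
  show "\<forall>s\<ge>0. (1 - A / B * (s / (s + 1 / A))) / lam \<le> laplace (p (n - 1)) (eps * s) \<and>
                laplace (p (n - 1)) (eps * s) \<le> (1 - s / (s + 1 / B)) / lam"
  proof (intro allI impI)
    fix s :: real assume s: "s \<ge> 0"
    define \<sigma> where "\<sigma> = eps * s"
    have sg: "\<sigma> \<ge> 0" unfolding \<sigma>_def using e s by simp
    have r1: "\<sigma> / (\<sigma> + 1 / bb) = s / (s + 1 / B)"
      unfolding \<sigma>_def AB using e ab s by (simp add: field_simps add_nonneg_pos)
    have r2: "aa / bb * (\<sigma> / (\<sigma> + 1 / aa)) = A / B * (s / (s + 1 / A))"
      unfolding \<sigma>_def AB using e ab s by (simp add: field_simps add_nonneg_pos)
    have m: "lam * laplace (p (n - 1)) \<sigma> + \<sigma> * laplace uu \<sigma> = 1" by (rule lap_main(3)[OF sg])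
    have b: "\<sigma> / (\<sigma> + 1 / bb) \<le> \<sigma> * laplace uu \<sigma> \<and> \<sigma> * laplace uu \<sigma> \<le> aa / bb * (\<sigma> / (\<sigma> + 1 / aa))"
      by (rule lap_uu_bounds[OF sg])
    have "lam * laplace (p (n - 1)) \<sigma> \<ge> 1 - A / B * (s / (s + 1 / A))"
      "lam * laplace (p (n - 1)) \<sigma> \<le> 1 - s / (s + 1 / B)"
      using m b unfolding r1 r2 by linarith+
    then show "(1 - A / B * (s / (s + 1 / A))) / lam \<le> laplace (p (n - 1)) (eps * s) \<and>
                laplace (p (n - 1)) (eps * s) \<le> (1 - s / (s + 1 / B)) / lam"
      using lam unfolding \<sigma>_def by (simp add: field_simps)
  qed
  show "\<forall>s. lst (\<lambda>t. if t < 0 then 0 else p n t) s = lam * laplace (p (n - 1)) s"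
    using lst_eq unfolding GG_def[abs_def] by simp
  show "\<forall>t\<ge>0. (p n has_real_derivative lam * p (n - 1) t) (at t within {0..})"
    using pn_deriv by simp
qed

end

theorem mainTheorem1:
  fixes n :: nat and lam :: real and p :: "real \<Rightarrow> nat \<Rightarrow> real \<Rightarrow> real"
  assumes "n \<ge> 2" and "lam > 0"
    and "\<And>mu. mu > 0 \<Longrightarrow> forward_dist lam mu n (p mu)"
  shows "(\<forall>t\<ge>0. ((\<lambda>mu. 1 - p mu n (t / (lam / mu) ^ (n - 1))) \<longlongrightarrow> exp (- lam * t)) at_top) \<and>
         (\<forall>s\<ge>0. ((\<lambda>mu. lst (\<lambda>t. if t < 0 then 0 else p mu n t) (s * (lam / mu) ^ (n - 1)))
                  \<longlongrightarrow> lam / (lam + s)) at_top) \<and>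
         (\<forall>mu>0. \<forall>t\<ge>0. (p mu n has_real_derivative lam * p mu (n - 1) t) (at t within {0..})) \<and>
         (\<forall>s\<ge>0. ((\<lambda>mu. laplace (p mu (n - 1)) ((lam / mu) ^ (n - 1) * s)) \<longlongrightarrow> 1 / (lam + s)) at_top)"
proof -
  note n2 = assms(1) and lam = assms(2)
  define A where "A mu = (lam / mu) ^ (n - 1) * mm lam mu n 0" for mu
  define B where "B mu = (lam / mu) ^ (n - 1) * dd lam mu (n - 1)" for mu
  note K = key[OF lam _ n2 assms(3), unfolded A_def[symmetric] B_def[symmetric]]
  have Alim: "(A \<longlongrightarrow> 1 / lam) at_top" unfolding A_def[abs_def] using lim_eps_aa[of lam n] lam n2 by simp
  have Blim: "(B \<longlongrightarrow> 1 / lam) at_top" unfolding B_def[abs_def] using lim_eps_bb[of lam n] lam by simp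
  have evpos: "eventually (\<lambda>mu::real. mu > 0) at_top" by (rule eventually_gt_at_top)
  have lamne: "1 / lam \<noteq> 0" using lam by simp
  have P1: "\<forall>t\<ge>0. ((\<lambda>mu. 1 - p mu n (t / (lam / mu) ^ (n - 1))) \<longlongrightarrow> exp (- lam * t)) at_top"
  proof (intro allI impI)
    fix t :: real assume t: "t \<ge> 0"
    have l1: "((\<lambda>mu. exp (- t / B mu)) \<longlongrightarrow> exp (- lam * t)) at_top"
    proof -
      have "((\<lambda>mu. exp (- t / B mu)) \<longlongrightarrow> exp (- t / (1 / lam))) at_top"
        by (intro tendsto_intros Blim lamne)
      also have "exp (- t / (1 / lam)) = exp (- lam * t)" using lam by simp
      finally show ?thesis .
    qed
    have l2: "((\<lambda>mu. A mu / B mu * exp (- t / A mu)) \<longlongrightarrow> exp (- lam * t)) at_top"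
    proof -
      have "((\<lambda>mu. A mu / B mu * exp (- t / A mu)) \<longlongrightarrow> (1 / lam) / (1 / lam) * exp (- t / (1 / lam))) at_top"
        by (intro tendsto_intros Alim Blim lamne)
      also have "(1 / lam) / (1 / lam) * exp (- t / (1 / lam)) = exp (- lam * t)" using lam by simp
      finally show ?thesis .
    qed
    show "((\<lambda>mu. 1 - p mu n (t / (lam / mu) ^ (n - 1))) \<longlongrightarrow> exp (- lam * t)) at_top"
    proof (rule tendsto_sandwich[OF _ _ l1 l2])
      show "eventually (\<lambda>mu. exp (- t / B mu) \<le> 1 - p mu n (t / (lam / mu) ^ (n - 1))) at_top"
        using evpos by eventually_elim (use K(1) t in blast)
      show "eventually (\<lambda>mu. 1 - p mu n (t / (lam / mu) ^ (n - 1)) \<le> A mu / B mu * exp (- t / A mu)) at_top"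
        using evpos by eventually_elim (use K(1) t in blast)
    qed
  qed
  have P4: "\<forall>s\<ge>0. ((\<lambda>mu. laplace (p mu (n - 1)) ((lam / mu) ^ (n - 1) * s)) \<longlongrightarrow> 1 / (lam + s)) at_top"
  proof (intro allI impI)
    fix s :: real assume s: "s \<ge> 0"
    have sl: "s + lam \<noteq> 0" using s lam by simp
    have pos: "lam * lam + lam * s > 0" using lam s by (simp add: add_pos_nonneg)
    have l1: "((\<lambda>mu. (1 - A mu / B mu * (s / (s + 1 / A mu))) / lam) \<longlongrightarrow> 1 / (lam + s)) at_top"
    proof -
      have "((\<lambda>mu. (1 - A mu / B mu * (s / (s + 1 / A mu))) / lam) \<longlongrightarrow>
               (1 - (1 / lam) / (1 / lam) * (s / (s + 1 / (1 / lam)))) / lam) at_top"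
        using sl lam by (intro tendsto_intros Alim Blim lamne) auto
      also have "(1 - (1 / lam) / (1 / lam) * (s / (s + 1 / (1 / lam)))) / lam = 1 / (lam + s)"
        using lam s sl pos by (simp add: field_simps)
      finally show ?thesis .
    qed
    have l2: "((\<lambda>mu. (1 - s / (s + 1 / B mu)) / lam) \<longlongrightarrow> 1 / (lam + s)) at_top"
    proof -
      have "((\<lambda>mu. (1 - s / (s + 1 / B mu)) / lam) \<longlongrightarrow> (1 - s / (s + 1 / (1 / lam))) / lam) at_top"
        using sl lam by (intro tendsto_intros Blim lamne) auto
      also have "(1 - s / (s + 1 / (1 / lam))) / lam = 1 / (lam + s)"
        using lam s sl pos by (simp add: field_simps)
      finally show ?thesis .
    qed
    show "((\<lambda>mu. laplace (p mu (n - 1)) ((lam / mu) ^ (n - 1) * s)) \<longlongrightarrow> 1 / (lam + s)) at_top"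
    proof (rule tendsto_sandwich[OF _ _ l1 l2])
      show "eventually (\<lambda>mu. (1 - A mu / B mu * (s / (s + 1 / A mu))) / lam \<le> laplace (p mu (n - 1)) ((lam / mu) ^ (n - 1) * s)) at_top"
        using evpos by eventually_elim (use K(2) s in blast)
      show "eventually (\<lambda>mu. laplace (p mu (n - 1)) ((lam / mu) ^ (n - 1) * s) \<le> (1 - s / (s + 1 / B mu)) / lam) at_top"
        using evpos by eventually_elim (use K(2) s in blast)
    qed
  qed
  have P2: "\<forall>s\<ge>0. ((\<lambda>mu. lst (\<lambda>t. if t < 0 then 0 else p mu n t) (s * (lam / mu) ^ (n - 1))) \<longlongrightarrow> lam / (lam + s)) at_top"
  proof (intro allI impI)
    fix s :: real assume s: "s \<ge> 0"
    have "((\<lambda>mu. lam * laplace (p mu (n - 1)) ((lam / mu) ^ (n - 1) * s)) \<longlongrightarrow> lam * (1 / (lam + s))) at_top"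
      using P4 s by (intro tendsto_mult_left) blast
    moreover have "eventually (\<lambda>mu. lam * laplace (p mu (n - 1)) ((lam / mu) ^ (n - 1) * s) =
        lst (\<lambda>t. if t < 0 then 0 else p mu n t) (s * (lam / mu) ^ (n - 1))) at_top"
      using evpos by eventually_elim (use K(3) in \<open>simp add: mult.commute\<close>)
    ultimately show "((\<lambda>mu. lst (\<lambda>t. if t < 0 then 0 else p mu n t) (s * (lam / mu) ^ (n - 1))) \<longlongrightarrow> lam / (lam + s)) at_top"
      by (auto dest: Lim_transform_eventually)
  qed
  have P3: "\<forall>mu>0. \<forall>t\<ge>0. (p mu n has_real_derivative lam * p mu (n - 1) t) (at t within {0..})"
    using K(4) by blast
  show ?thesis using P1 P2 P3 P4 by blast
qed

end
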